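(* Consider a GND instance and a reply $\varrho$-oracle ($\varrho\ge1$) for its requests. Let $p^0=(p^0_1,\dots,p^0_N)$ where, for each $i\in[N]$, $p^0_i\in P_i$ is the output of the oracle on $P_i$ with the toll function $\tau_i^0(e)=F_e(w_i(e))$, $e\in E$. Then $C(p^0) \le \varrho \cdot N^{\max_j \alpha_j} \cdot C^*$.
   Context: GND instance: finite resource set $E$; requests $i \in [N]$, each with a reply collection $P_i \subseteq 2^E$ and a weight vector $w_i \in \mathbb{Z}_{\geq 1}^E$; constants $q \in \mathbb{Z}_{\ge1}$, $\alpha_1,\dots,\alpha_q > 1$; for each $e$, $\sigma_e \geq 0$ and $\xi_{e,j} \geq 0$ (at least one $\xi_{e,j}>0$), and cost function $F_e(0)=0$, $F_e(l)=\sigma_e+\sum_j \xi_{e,j} l^{\alpha_j}$ for $l>0$. A feasible solution is $p=(p_1,\dots,p_N)$ with $p_i\in P_i$; load $l_e^p=\sum_{i:e\in p_i} w_i(e)$; total cost $C(p)=\sum_e F_e(l_e^p)$; $C^*$ is the minimum total cost. A reply $\varrho$-oracle, given a reply collection $R$ and tolls $\tau:E\to\mathbb{R}_{>0}$, returns $r\in R$ with $\sum_{e\in r}\tau(e)\le\varrho\sum_{e\in r'}\tau(e)$ for every $r'\in R$. *)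

theory Defs
  imports Complex_Main
begin

definition cost_fn :: "nat \<Rightarrow> (nat \<Rightarrow> real) \<Rightarrow> ('e \<Rightarrow> real) \<Rightarrow> ('e \<Rightarrow> nat \<Rightarrow> real)
    \<Rightarrow> 'e \<Rightarrow> real \<Rightarrow> real" where
  "cost_fn q alpha sigma xi e l =
     (if l = 0 then 0 else sigma e + (\<Sum>j<q. xi e j * l powr alpha j))"

definition load :: "nat \<Rightarrow> (nat \<Rightarrow> 'e \<Rightarrow> nat) \<Rightarrow> (nat \<Rightarrow> 'e set) \<Rightarrow> 'e \<Rightarrow> nat" where
  "load N w p e = (\<Sum>i\<in>{i. i < N \<and> e \<in> p i}. w i e)"

definition total_cost :: "'e set \<Rightarrow> nat \<Rightarrow> (nat \<Rightarrow> 'e \<Rightarrow> nat) \<Rightarrow> nat \<Rightarrow> (nat \<Rightarrow> real)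
    \<Rightarrow> ('e \<Rightarrow> real) \<Rightarrow> ('e \<Rightarrow> nat \<Rightarrow> real) \<Rightarrow> (nat \<Rightarrow> 'e set) \<Rightarrow> real" where
  "total_cost E N w q alpha sigma xi p =
     (\<Sum>e\<in>E. cost_fn q alpha sigma xi e (real (load N w p e)))"

definition feasible :: "nat \<Rightarrow> (nat \<Rightarrow> 'e set set) \<Rightarrow> (nat \<Rightarrow> 'e set) \<Rightarrow> bool" where
  "feasible N P p \<longleftrightarrow> (\<forall>i<N. p i \<in> P i)"

text \<open>Optimal cost C*: minimum total cost over feasible solutions (the set of
  attained values is finite since E is finite).\<close>
definition opt_cost :: "'e set \<Rightarrow> nat \<Rightarrow> (nat \<Rightarrow> 'e set set) \<Rightarrow> (nat \<Rightarrow> 'e \<Rightarrow> nat) \<Rightarrow> nat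
    \<Rightarrow> (nat \<Rightarrow> real) \<Rightarrow> ('e \<Rightarrow> real) \<Rightarrow> ('e \<Rightarrow> nat \<Rightarrow> real) \<Rightarrow> real" where
  "opt_cost E N P w q alpha sigma xi =
     Min {total_cost E N w q alpha sigma xi p | p. feasible N P p}"

definition reply_oracle :: "'e set \<Rightarrow> real \<Rightarrow> ('e set set \<Rightarrow> ('e \<Rightarrow> real) \<Rightarrow> 'e set) \<Rightarrow> bool" where
  "reply_oracle E rho orc \<longleftrightarrow>
     (\<forall>R \<tau>. R \<subseteq> Pow E \<and> R \<noteq> {} \<and> (\<forall>e\<in>E. \<tau> e > 0) \<longrightarrow>
        orc R \<tau> \<in> R \<and> (\<forall>r'\<in>R. (\<Sum>e\<in>orc R \<tau>. \<tau> e) \<le> rho * (\<Sum>e\<in>r'. \<tau> e)))"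

end

theory Submission imports Defs "HOL-Analysis.Analysis" begin

lemma power_mean:
  fixes a :: "'i \<Rightarrow> real"
  assumes "finite I" "I \<noteq> {}" "\<And>i. i \<in> I \<Longrightarrow> a i > 0" "al \<ge> 1"
  shows "(\<Sum>i\<in>I. a i) powr al \<le> real (card I) powr (al - 1) * (\<Sum>i\<in>I. a i powr al)"
proof -
  define k where "k = real (card I)"
  have k: "k > 0" using assms by (simp add: k_def card_gt_0_iff)
  have "(\<Sum>i\<in>I. (1/k) *\<^sub>R a i) powr al \<le> (\<Sum>i\<in>I. (1/k) * a i powr al)"
    by (rule convex_on_sum[OF assms(1,2) powr_convex[OF assms(4)]])
       (use assms k in \<open>auto simp: k_def\<close>)
  hence "((\<Sum>i\<in>I. a i) / k) powr al \<le> (\<Sum>i\<in>I. a i powr al) / k"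
    by (simp add: sum_distrib_left[symmetric] sum_divide_distrib[symmetric] divide_inverse mult.commute)
  moreover have "((\<Sum>i\<in>I. a i) / k) powr al = (\<Sum>i\<in>I. a i) powr al / k powr al"
    using assms k by (auto intro!: powr_divide sum_nonneg less_imp_le)
  ultimately have "(\<Sum>i\<in>I. a i) powr al \<le> k powr al * ((\<Sum>i\<in>I. a i powr al) / k)"
    using k by (simp add: divide_le_eq mult.commute)
  also have "\<dots> = k powr (al - 1) * (\<Sum>i\<in>I. a i powr al)"
    using k by (simp add: powr_diff)
  finally show ?thesis by (simp add: k_def)
qed

lemma superadd:
  fixes a :: "'i \<Rightarrow> real"
  assumes "finite I" "\<And>i. i \<in> I \<Longrightarrow> a i \<ge> 0" "al \<ge> 1"
  shows "(\<Sum>i\<in>I. a i powr al) \<le> (\<Sum>i\<in>I. a i) powr al"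
proof -
  define S where "S = (\<Sum>i\<in>I. a i)"
  have le: "a i \<le> S" if "i \<in> I" for i
    unfolding S_def using assms that by (intro member_le_sum) auto
  have "a i powr al \<le> a i * S powr (al - 1)" if "i \<in> I" for i
  proof (cases "a i = 0")
    case True thus ?thesis using assms by simp
  next
    case False
    hence "a i > 0" using assms that by force
    hence "a i powr al = a i * a i powr (al - 1)" by (simp add: powr_diff powr_one_gt_zero_iff)
    also have "\<dots> \<le> a i * S powr (al - 1)"
      using \<open>a i > 0\<close> le[OF that] assms by (intro mult_left_mono powr_mono2) auto
    finally show ?thesis .
  qed
  hence "(\<Sum>i\<in>I. a i powr al) \<le> (\<Sum>i\<in>I. a i * S powr (al - 1))" by (rule sum_mono)
  also have "\<dots> = S * S powr (al - 1)" by (simp add: S_def sum_distrib_right)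
  also have "\<dots> = S powr al"
  proof (cases "S = 0")
    case True thus ?thesis using assms by simp
  next
    case False
    hence "S > 0" using assms unfolding S_def by (metis sum_nonneg order_le_less)
    thus ?thesis by (simp add: powr_diff)
  qed
  finally show ?thesis by (simp add: S_def)
qed


lemma L1:
  fixes a :: "'i \<Rightarrow> nat" and sigma :: "'e \<Rightarrow> real" and xi :: "'e \<Rightarrow> nat \<Rightarrow> real"
    and alpha :: "nat \<Rightarrow> real" and A :: real
  assumes I: "finite I" "I \<noteq> {}" "card I \<le> N"
    and a: "\<And>i. i \<in> I \<Longrightarrow> a i \<ge> 1"
    and sg: "sigma e \<ge> 0" and xi: "\<And>j. j < q \<Longrightarrow> xi e j \<ge> 0"
    and al: "\<And>j. j < q \<Longrightarrow> alpha j > 1" "\<And>j. j < q \<Longrightarrow> alpha j \<le> A"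
    and A: "A \<ge> 1"
  shows "cost_fn q alpha sigma xi e (real (\<Sum>i\<in>I. a i))
     \<le> real N powr (A - 1) * (\<Sum>i\<in>I. cost_fn q alpha sigma xi e (real (a i)))"
proof -
  define k where "k = real (card I)"
  have k1: "k \<ge> 1" using I by (simp add: k_def Suc_le_eq card_gt_0_iff)
  have kN: "k \<le> real N" using I by (simp add: k_def)
  have N1: "real N powr (A - 1) \<ge> 1" using kN k1 A by (simp add: ge_one_powr_ge_zero)
  have pos: "real (a i) > 0" if "i \<in> I" for i using a[OF that] by simp
  have sum_ne: "real (\<Sum>i\<in>I. a i) \<noteq> 0"
  proof -
    obtain i where "i \<in> I" using I by blast
    hence "a i \<le> (\<Sum>i\<in>I. a i)" using I by (intro member_le_sum) auto
    hence "sum a I \<noteq> 0" using a[OF \<open>i \<in> I\<close>] by linarith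
    thus ?thesis by (metis of_nat_eq_0_iff)
  qed
  have lhs: "cost_fn q alpha sigma xi e (real (\<Sum>i\<in>I. a i))
       = sigma e + (\<Sum>j<q. xi e j * (\<Sum>i\<in>I. real (a i)) powr alpha j)"
    using sum_ne by (simp add: cost_fn_def)
  have rhs: "(\<Sum>i\<in>I. cost_fn q alpha sigma xi e (real (a i)))
       = k * sigma e + (\<Sum>j<q. xi e j * (\<Sum>i\<in>I. real (a i) powr alpha j))"
    using pos by (simp add: cost_fn_def sum.distrib k_def sum_distrib_left sum.swap[of _ I] less_imp_neq[symmetric])
  have "(\<Sum>j<q. xi e j * (\<Sum>i\<in>I. real (a i)) powr alpha j)
      \<le> (\<Sum>j<q. xi e j * (real N powr (A - 1) * (\<Sum>i\<in>I. real (a i) powr alpha j)))"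
  proof (intro sum_mono mult_left_mono)
    fix j assume j: "j \<in> {..<q}"
    have "(\<Sum>i\<in>I. real (a i)) powr alpha j \<le> k powr (alpha j - 1) * (\<Sum>i\<in>I. real (a i) powr alpha j)"
      unfolding k_def using I pos al(1)[of j] j by (intro power_mean) auto
    also have "\<dots> \<le> real N powr (A - 1) * (\<Sum>i\<in>I. real (a i) powr alpha j)"
    proof (intro mult_right_mono sum_nonneg)
      have "k powr (alpha j - 1) \<le> real N powr (alpha j - 1)"
        using k1 kN al(1)[of j] j by (intro powr_mono2) auto
      also have "\<dots> \<le> real N powr (A - 1)"
        using k1 kN al(2)[of j] j by (intro powr_mono) auto
      finally show "k powr (alpha j - 1) \<le> real N powr (A - 1)" .
    qed auto
    finally show "(\<Sum>i\<in>I. real (a i)) powr alpha j \<le> real N powr (A - 1) * (\<Sum>i\<in>I. real (a i) powr alpha j)" .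
    show "0 \<le> xi e j" using xi j by auto
  qed
  moreover have "sigma e \<le> real N powr (A - 1) * (k * sigma e)"
  proof -
    have "sigma e \<le> k * sigma e" using k1 sg mult_right_mono[of 1 k "sigma e"] by simp
    also have "\<dots> \<le> real N powr (A - 1) * (k * sigma e)"
      using N1 k1 sg mult_right_mono[of 1 "real N powr (A - 1)" "k * sigma e"] by simp
    finally show ?thesis .
  qed
  ultimately show ?thesis unfolding lhs rhs
    by (simp add: distrib_left sum_distrib_left mult.left_commute)
qed

lemma L4:
  fixes a :: "'i \<Rightarrow> nat" and sigma :: "'e \<Rightarrow> real" and xi :: "'e \<Rightarrow> nat \<Rightarrow> real"
    and alpha :: "nat \<Rightarrow> real" and A :: real
  assumes I: "finite I" "card I \<le> N"
    and a: "\<And>i. i \<in> I \<Longrightarrow> a i \<ge> 1"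
    and sg: "sigma e \<ge> 0" and xi: "\<And>j. j < q \<Longrightarrow> xi e j \<ge> 0"
    and al: "\<And>j. j < q \<Longrightarrow> alpha j > 1"
  shows "(\<Sum>i\<in>I. cost_fn q alpha sigma xi e (real (a i)))
     \<le> real N * cost_fn q alpha sigma xi e (real (\<Sum>i\<in>I. a i))"
proof (cases "I = {}")
  case True thus ?thesis by (simp add: cost_fn_def)
next
  case False
  define k where "k = real (card I)"
  have k1: "k \<ge> 1" using I False by (simp add: k_def Suc_le_eq card_gt_0_iff)
  have kN: "k \<le> real N" using I by (simp add: k_def)
  have pos: "real (a i) > 0" if "i \<in> I" for i using a[OF that] by simp
  have sum_ne: "real (\<Sum>i\<in>I. a i) \<noteq> 0"
  proof -
    obtain i where "i \<in> I" using False by blast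
    hence "a i \<le> (\<Sum>i\<in>I. a i)" using I by (intro member_le_sum) auto
    hence "sum a I \<noteq> 0" using a[OF \<open>i \<in> I\<close>] by linarith
    thus ?thesis by (metis of_nat_eq_0_iff)
  qed
  have rhs: "cost_fn q alpha sigma xi e (real (\<Sum>i\<in>I. a i))
       = sigma e + (\<Sum>j<q. xi e j * (\<Sum>i\<in>I. real (a i)) powr alpha j)"
    using sum_ne by (simp add: cost_fn_def)
  have lhs: "(\<Sum>i\<in>I. cost_fn q alpha sigma xi e (real (a i)))
       = k * sigma e + (\<Sum>j<q. xi e j * (\<Sum>i\<in>I. real (a i) powr alpha j))"
    using pos by (simp add: cost_fn_def sum.distrib k_def sum_distrib_left sum.swap[of _ I] less_imp_neq[symmetric])
  have T: "(\<Sum>j<q. xi e j * (\<Sum>i\<in>I. real (a i) powr alpha j))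
      \<le> (\<Sum>j<q. xi e j * (\<Sum>i\<in>I. real (a i)) powr alpha j)"
    using xi al I(1) by (intro sum_mono mult_left_mono superadd) (auto simp: less_imp_le)
  have T0: "0 \<le> (\<Sum>j<q. xi e j * (\<Sum>i\<in>I. real (a i)) powr alpha j)"
    using xi by (intro sum_nonneg) auto
  have "k * sigma e + (\<Sum>j<q. xi e j * (\<Sum>i\<in>I. real (a i)) powr alpha j)
     \<le> real N * sigma e + real N * (\<Sum>j<q. xi e j * (\<Sum>i\<in>I. real (a i)) powr alpha j)"
    using kN k1 sg T0 mult_right_mono[of k "real N" "sigma e"]
      mult_right_mono[of 1 "real N" "(\<Sum>j<q. xi e j * (\<Sum>i\<in>I. real (a i)) powr alpha j)"]
    by (intro add_mono) auto
  hence "k * sigma e + (\<Sum>j<q. xi e j * (\<Sum>i\<in>I. real (a i)) powr alpha j)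
     \<le> real N * (sigma e + (\<Sum>j<q. xi e j * (\<Sum>i\<in>I. real (a i)) powr alpha j))"
    by (simp add: distrib_left)
  thus ?thesis unfolding lhs rhs using T by linarith
qed

theorem lemma5p2:
  fixes E :: "'e set" and N :: nat and P :: "nat \<Rightarrow> 'e set set"
    and w :: "nat \<Rightarrow> 'e \<Rightarrow> nat" and q :: nat and alpha :: "nat \<Rightarrow> real"
    and sigma :: "'e \<Rightarrow> real" and xi :: "'e \<Rightarrow> nat \<Rightarrow> real"
    and rho :: real and orc :: "'e set set \<Rightarrow> ('e \<Rightarrow> real) \<Rightarrow> 'e set"
    and p0 :: "nat \<Rightarrow> 'e set"
  assumes "finite E"
    and "\<And>i. i < N \<Longrightarrow> P i \<subseteq> Pow E"
    and "\<And>i. i < N \<Longrightarrow> P i \<noteq> {}"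
    and "\<And>i e. i < N \<Longrightarrow> e \<in> E \<Longrightarrow> w i e \<ge> 1"
    and "q \<ge> 1"
    and "\<And>j. j < q \<Longrightarrow> alpha j > 1"
    and "\<And>e. e \<in> E \<Longrightarrow> sigma e \<ge> 0"
    and "\<And>e j. e \<in> E \<Longrightarrow> j < q \<Longrightarrow> xi e j \<ge> 0"
    and "\<And>e. e \<in> E \<Longrightarrow> \<exists>j<q. xi e j > 0"
    and "rho \<ge> 1"
    and "reply_oracle E rho orc"
    and "\<And>i. i < N \<Longrightarrow> p0 i = orc (P i) (\<lambda>e. cost_fn q alpha sigma xi e (real (w i e)))"
  shows "total_cost E N w q alpha sigma xi p0
           \<le> rho * (real N powr (Max (alpha ` {..<q}))) * opt_cost E N P w q alpha sigma xi"
proof -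
  note assms(1)[simp]
  define F where "F = cost_fn q alpha sigma xi"
  define tau where "tau i e = F e (real (w i e))" for i e
  define A where "A = Max (alpha ` {..<q})"
  have alA: "alpha j \<le> A" if "j < q" for j unfolding A_def using that by (intro Max_ge) auto
  have A1: "A \<ge> 1" using alA[of 0] assms(5) assms(6)[of 0] by auto
  have tau_pos: "tau i e > 0" if iN: "i < N" and eE: "e \<in> E" for i e
  proof -
    obtain j where j: "j < q" "xi e j > 0" using assms(9) eE by blast
    have w0: "real (w i e) > 0" using assms(4)[OF iN eE] by simp
    have "xi e j * real (w i e) powr alpha j > 0" using j w0 by simp
    moreover have "(\<Sum>j'\<in>{..<q}-{j}. xi e j' * real (w i e) powr alpha j') \<ge> 0"
      using assms(8)[OF eE] by (intro sum_nonneg) auto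
    moreover have "(\<Sum>j'<q. xi e j' * real (w i e) powr alpha j') =
       xi e j * real (w i e) powr alpha j + (\<Sum>j'\<in>{..<q}-{j}. xi e j' * real (w i e) powr alpha j')"
      using j by (subst sum.remove[of _ j]) auto
    ultimately show ?thesis using assms(7)[OF eE] w0
      by (simp add: tau_def F_def cost_fn_def)
  qed
  show ?thesis
  proof (cases "N = 0")
    case True
    thus ?thesis by (simp add: total_cost_def load_def cost_fn_def)
  next
    case False
    hence N1: "real N \<ge> 1" by simp
    have tc_eq: "total_cost E N w q alpha sigma xi p = total_cost E N w q alpha sigma xi (restrict p {..<N})" for p
    proof -
      have "{i. i < N \<and> e \<in> restrict p {..<N} i} = {i. i < N \<and> e \<in> p i}" for e by auto
      thus ?thesis unfolding total_cost_def load_def by (simp only:)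
    qed
    define S where "S = {total_cost E N w q alpha sigma xi p | p. feasible N P p}"
    have "S \<subseteq> (\<lambda>p. total_cost E N w q alpha sigma xi p) ` (PiE {..<N} P)"
    proof
      fix x assume "x \<in> S"
      then obtain p where p: "feasible N P p" "x = total_cost E N w q alpha sigma xi p" unfolding S_def by blast
      hence "restrict p {..<N} \<in> PiE {..<N} P" by (auto simp: feasible_def)
      thus "x \<in> (\<lambda>p. total_cost E N w q alpha sigma xi p) ` (PiE {..<N} P)" using p tc_eq by blast
    qed
    moreover have "finite (PiE {..<N} P)"
      using assms(2) by (intro finite_PiE) (simp, metis assms(1) finite_Pow_iff finite_subset lessThan_iff)
    ultimately have finS: "finite S" by (meson finite_imageI finite_subset)
    have "feasible N P (\<lambda>i. SOME r. r \<in> P i)"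
      unfolding feasible_def using assms(3) by (auto intro: some_in_eq[THEN iffD2])
    hence "S \<noteq> {}" unfolding S_def by blast
    hence "Min S \<in> S" using finS by simp
    then obtain ps where ps: "feasible N P ps" "opt_cost E N P w q alpha sigma xi = total_cost E N w q alpha sigma xi ps"
      unfolding S_def opt_cost_def by auto
    have psE: "ps i \<subseteq> E" if "i < N" for i using ps(1) assms(2) that unfolding feasible_def by blast
    have orc: "p0 i \<in> P i \<and> (\<Sum>e\<in>p0 i. tau i e) \<le> rho * (\<Sum>e\<in>ps i. tau i e)" if "i < N" for i
    proof -
      have "orc (P i) (tau i) \<in> P i \<and> (\<forall>r'\<in>P i. (\<Sum>e\<in>orc (P i) (tau i). tau i e) \<le> rho * (\<Sum>e\<in>r'. tau i e))"
        using assms(11) assms(2,3)[OF that] tau_pos[OF that] unfolding reply_oracle_def by blast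
      moreover have "p0 i = orc (P i) (tau i)" using assms(12)[OF that] by (simp add: tau_def[abs_def] F_def)
      moreover have "ps i \<in> P i" using ps(1) that by (simp add: feasible_def)
      ultimately show ?thesis by auto
    qed
    have p0E: "p0 i \<subseteq> E" if "i < N" for i using orc[OF that] assms(2)[OF that] by blast
    have swap: "(\<Sum>e\<in>E. \<Sum>i\<in>{i. i < N \<and> e \<in> p i}. tau i e) = (\<Sum>i<N. \<Sum>e\<in>p i. tau i e)"
      if "\<And>i. i < N \<Longrightarrow> p i \<subseteq> E" for p
    proof -
      have "(\<Sum>i\<in>{..<N}. \<Sum>e\<in>{e\<in>E. e \<in> p i}. tau i e) = (\<Sum>e\<in>E. \<Sum>i\<in>{i\<in>{..<N}. e \<in> p i}. tau i e)"
        by (rule sum.swap_restrict) auto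
      moreover have "{e\<in>E. e \<in> p i} = p i" if "i \<in> {..<N}" for i using \<open>\<And>i. i < N \<Longrightarrow> p i \<subseteq> E\<close> that by auto
      moreover have "{i\<in>{..<N}. e \<in> p i} = {i. i < N \<and> e \<in> p i}" for e by auto
      ultimately show ?thesis by simp
    qed
    have "total_cost E N w q alpha sigma xi p0 = (\<Sum>e\<in>E. F e (real (\<Sum>i\<in>{i. i < N \<and> e \<in> p0 i}. w i e)))"
      by (simp add: total_cost_def load_def F_def)
    also have "\<dots> \<le> (\<Sum>e\<in>E. real N powr (A - 1) * (\<Sum>i\<in>{i. i < N \<and> e \<in> p0 i}. tau i e))"
    proof (intro sum_mono)
      fix e assume e: "e \<in> E"
      define I where "I = {i. i < N \<and> e \<in> p0 i}"
      have cI: "card I \<le> N" unfolding I_def using card_mono[of "{..<N}" "{i. i < N \<and> e \<in> p0 i}"] by auto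
      have fI: "finite I" unfolding I_def by auto
      show "F e (real (\<Sum>i\<in>{i. i < N \<and> e \<in> p0 i}. w i e)) \<le> real N powr (A - 1) * (\<Sum>i\<in>{i. i < N \<and> e \<in> p0 i}. tau i e)"
      proof (cases "I = {}")
        case True hence "{i. i < N \<and> e \<in> p0 i} = {}" by (simp add: I_def)
        thus ?thesis by (simp only: sum.empty of_nat_0 mult_zero_right) (simp add: F_def cost_fn_def)
      next
        case False
        show ?thesis unfolding tau_def F_def I_def[symmetric]
          using fI False cI assms(4) e assms(7,8)[OF e] assms(6) alA A1
          by (intro L1) (auto simp: I_def)
      qed
    qed
    also have "\<dots> = real N powr (A - 1) * (\<Sum>i<N. \<Sum>e\<in>p0 i. tau i e)"
      by (simp add: sum_distrib_left[symmetric] swap p0E)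
    also have "\<dots> \<le> real N powr (A - 1) * (\<Sum>i<N. rho * (\<Sum>e\<in>ps i. tau i e))"
      using orc by (intro mult_left_mono sum_mono) auto
    also have "\<dots> = real N powr (A - 1) * rho * (\<Sum>e\<in>E. \<Sum>i\<in>{i. i < N \<and> e \<in> ps i}. tau i e)"
      by (simp add: sum_distrib_left[symmetric] swap psE)
    also have "\<dots> \<le> real N powr (A - 1) * rho * (\<Sum>e\<in>E. real N * F e (real (\<Sum>i\<in>{i. i < N \<and> e \<in> ps i}. w i e)))"
    proof (intro mult_left_mono sum_mono)
      fix e assume e: "e \<in> E"
      define I where "I = {i. i < N \<and> e \<in> ps i}"
      have cI: "card I \<le> N" unfolding I_def using card_mono[of "{..<N}" "{i. i < N \<and> e \<in> ps i}"] by auto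
      have fI: "finite I" unfolding I_def by auto
      show "(\<Sum>i\<in>{i. i < N \<and> e \<in> ps i}. tau i e) \<le> real N * F e (real (\<Sum>i\<in>{i. i < N \<and> e \<in> ps i}. w i e))"
        unfolding tau_def F_def I_def[symmetric]
        using fI cI assms(4) e assms(7,8)[OF e] assms(6)
        by (intro L4) (auto simp: I_def)
    qed (use assms(10) in auto)
    also have "\<dots> = rho * (real N powr (A - 1) * real N) * total_cost E N w q alpha sigma xi ps"
      by (simp add: total_cost_def load_def F_def sum_distrib_left[symmetric] mult_ac)
    also have "real N powr (A - 1) * real N = real N powr A"
      using N1 by (simp add: powr_diff)
    finally show ?thesis using ps(2) by (simp add: A_def)
  qed
qed

end
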